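(* Consider a Bayesian neural network with $L$ layers, input $\mathbf{h}^{(0)}=\mathbf{x}$, hidden variables $\mathbf{h}^{(1)},\dots,\mathbf{h}^{(L-1)}$, output $\mathbf{h}^{(L)}=\mathbf{y}$, and model parameters $\boldsymbol{\theta}=(\boldsymbol{\theta}^{(0)},\dots,\boldsymbol{\theta}^{(L-1)})$. Assume: (i) the approximate posterior over the parameters factorizes over layers, $Q(\boldsymbol{\theta};\phi)=\prod_{l=0}^{L-1}Q(\boldsymbol{\theta}^{(l)};\phi^{(l)})$; (ii) the hidden variables are Markovian, $\Pr[\mathbf{h}^{(l+1)}\mid \mathbf{h}^{(0)},\dots,\mathbf{h}^{(l)},\boldsymbol{\theta}^{(0)},\dots,\boldsymbol{\theta}^{(l)}]=\Pr[\mathbf{h}^{(l+1)}\mid \mathbf{h}^{(l)},\boldsymbol{\theta}^{(l)}]$ for all $l$. Fix a data point $(x_n,y_n)$ and define $$\mathcal{L}_n(\phi)=\mathbb{E}_{\boldsymbol{\theta}\sim Q(\cdot;\phi)}\big[\log \Pr[y_n\mid x_n,\boldsymbol{\theta}]\big],$$ where $\Pr[y_n\mid x_n,\theta]=\int \Pr[y_n\mid h^{(L-1)},\theta^{(L-1)}]\,\Pr[h^{(L-1)}\mid x_n,\theta^{(0:L-2)}]\,dh^{(L-1)}$. Let $P(h^{(L-1)})=\Pr[h^{(L-1)}\mid x_n]=\int \Pr[h^{(L-1)}\mid x_n,\theta^{(0:L-2)}]\prod_{l=0}^{L-2}Q(\theta^{(l)};\phi^{(l)})\,d\theta^{(0:L-2)}$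 be the predictive distribution of $\mathbf{h}^{(L-1)}$ given $x_n$, and define $$\overline{\mathcal{L}}_n(\phi)=\mathbb{E}_{\mathbf{h}^{(L-1)}\sim P;\ \boldsymbol{\theta}^{(L-1)}\sim Q(\cdot;\phi^{(L-1)})}\big[\log \Pr[y_n\mid \mathbf{h}^{(L-1)},\boldsymbol{\theta}^{(L-1)}]\big],$$ with $\mathbf{h}^{(L-1)}$ and $\boldsymbol{\theta}^{(L-1)}$ drawn independently. Then $\overline{\mathcal{L}}_n(\phi)\le \mathcal{L}_n(\phi)$. Moreover, equality $\overline{\mathcal{L}}_n(\phi)=\mathcal{L}_n(\phi)$ holds if $\mathbf{h}^{(L-1)}$ is deterministic given the input $x_n$ and the parameters $\theta^{(0:L-2)}$ of all layers before the last.
   Context: Notation: $\theta^{(0:L-2)}$ denotes $(\theta^{(0)},\dots,\theta^{(L-2)})$. All expectations/integrals are assumed well defined (integrals become sums for discrete variables). $\mathcal{L}_n(\phi)$ is the expected log-likelihood term of the evidence lower bound for variational Bayesian learning. *)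

theory Defs
  imports "HOL-Probability.Probability"
begin

text \<open>Layers: hidden variable h^(l) lives in the measurable space S l (carried by a
common type 'h); the parameters theta^(l) of layer l live in the space of Q l, where
Q l = Q(.;phi^(l)) is the (fixed-phi) approximate posterior factor of layer l.
T l h p is the conditional distribution Pr[h^(l+1) | h^(l) = h, theta^(l) = p].\<close>

text \<open>Pr[h^(l) | x, theta^(0:l-1)], obtained from the Markov chain of layer transitions.\<close>
fun hidden :: "(nat \<Rightarrow> 'h measure) \<Rightarrow> (nat \<Rightarrow> 'h \<Rightarrow> 'p \<Rightarrow> 'h measure) \<Rightarrow> 'h \<Rightarrow> nat
                \<Rightarrow> (nat \<Rightarrow> 'p) \<Rightarrow> 'h measure" where
  "hidden S T x 0 \<theta> = return (S 0) x"
| "hidden S T x (Suc l) \<theta> = bind (hidden S T x l \<theta>) (\<lambda>h. T l h (\<theta> l))"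

text \<open>Pr[y_n | x_n, theta] = integral of Pr[y_n | h^(L-1), theta^(L-1)] against
Pr[h^(L-1) | x_n, theta^(0:L-2)]; lik h p stands for Pr[y_n | h^(L-1) = h, theta^(L-1) = p].\<close>
definition pred_lik :: "(nat \<Rightarrow> 'h measure) \<Rightarrow> (nat \<Rightarrow> 'h \<Rightarrow> 'p \<Rightarrow> 'h measure) \<Rightarrow> 'h \<Rightarrow> nat
                \<Rightarrow> ('h \<Rightarrow> 'p \<Rightarrow> real) \<Rightarrow> (nat \<Rightarrow> 'p) \<Rightarrow> real" where
  "pred_lik S T x L lik \<theta> = (\<integral>h. lik h (\<theta> (L - 1)) \<partial>(hidden S T x (L - 1) \<theta>))"

definition ell :: "(nat \<Rightarrow> 'p measure) \<Rightarrow> (nat \<Rightarrow> 'h measure) \<Rightarrow> (nat \<Rightarrow> 'h \<Rightarrow> 'p \<Rightarrow> 'h measure)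
                \<Rightarrow> 'h \<Rightarrow> nat \<Rightarrow> ('h \<Rightarrow> 'p \<Rightarrow> real) \<Rightarrow> real" where
  "ell Q S T x L lik = (\<integral>\<theta>. ln (pred_lik S T x L lik \<theta>) \<partial>(PiM {..<L} Q))"

definition hidden_pred :: "(nat \<Rightarrow> 'p measure) \<Rightarrow> (nat \<Rightarrow> 'h measure) \<Rightarrow> (nat \<Rightarrow> 'h \<Rightarrow> 'p \<Rightarrow> 'h measure)
                \<Rightarrow> 'h \<Rightarrow> nat \<Rightarrow> 'h measure" where
  "hidden_pred Q S T x L = bind (PiM {..<L - 1} Q) (\<lambda>\<theta>. hidden S T x (L - 1) \<theta>)"

definition ell_bar :: "(nat \<Rightarrow> 'p measure) \<Rightarrow> (nat \<Rightarrow> 'h measure) \<Rightarrow> (nat \<Rightarrow> 'h \<Rightarrow> 'p \<Rightarrow> 'h measure)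
                \<Rightarrow> 'h \<Rightarrow> nat \<Rightarrow> ('h \<Rightarrow> 'p \<Rightarrow> real) \<Rightarrow> real" where
  "ell_bar Q S T x L lik =
     (\<integral>z. ln (lik (fst z) (snd z)) \<partial>(hidden_pred Q S T x L \<Otimes>\<^sub>M Q (L - 1)))"

end

theory Submission
  imports Defs
begin

lemma hidden_cong:
  "(\<forall>l<k. \<theta> l = \<theta>' l) \<Longrightarrow> hidden S T x k \<theta> = hidden S T x k \<theta>'"
  by (induction k) auto

lemma hidden_kernel:
  assumes x: "x \<in> space (S 0)"
    and T: "\<forall>l. Suc l < L \<longrightarrow>
              (\<lambda>(h, p). T l h p) \<in> S l \<Otimes>\<^sub>M Q l \<rightarrow>\<^sub>M prob_algebra (S (Suc l))"
  shows "k < L \<Longrightarrow> {..<k} \<subseteq> I \<Longrightarrow> (\<lambda>\<theta>. hidden S T x k \<theta>) \<in> PiM I Q \<rightarrow>\<^sub>M prob_algebra (S k)"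
proof (induction k)
  case 0
  have "return (S 0) x \<in> space (prob_algebra (S 0))"
    using x by (simp add: space_prob_algebra prob_space_return)
  then show ?case by simp
next
  case (Suc k)
  have IH: "(\<lambda>\<theta>. hidden S T x k \<theta>) \<in> PiM I Q \<rightarrow>\<^sub>M prob_algebra (S k)"
  proof -
    have "{..<k} \<subseteq> I" using Suc.prems(2) by auto
    then show ?thesis using Suc.IH Suc.prems(1) by simp
  qed
  have kI: "k \<in> I" using Suc by auto
  have Tk: "(\<lambda>(h, p). T k h p) \<in> S k \<Otimes>\<^sub>M Q k \<rightarrow>\<^sub>M prob_algebra (S (Suc k))"
    using T Suc by auto
  have "(\<lambda>z. (snd z, fst z k)) \<in> PiM I Q \<Otimes>\<^sub>M S k \<rightarrow>\<^sub>M S k \<Otimes>\<^sub>M Q k"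
    using kI by measurable
  from measurable_compose[OF this Tk]
  have "(\<lambda>(\<theta>, h). T k h (\<theta> k)) \<in> PiM I Q \<Otimes>\<^sub>M S k \<rightarrow>\<^sub>M prob_algebra (S (Suc k))"
    by (simp add: split_beta')
  from measurable_bind_prob_space2[OF IH this] show ?case by simp
qed

lemma bind_integral_nonneg:
  fixes g :: "'b \<Rightarrow> real"
  assumes N: "N \<in> M \<rightarrow>\<^sub>M prob_algebra K" and M: "prob_space M"
    and g: "integrable (bind M N) g" and g0: "\<And>y. 0 \<le> g y"
  shows "AE x in M. integrable (N x) g"
    and "integrable M (\<lambda>x. integral\<^sup>L (N x) g)"
    and "integral\<^sup>L (bind M N) g = (\<integral>x. integral\<^sup>L (N x) g \<partial>M)"
proof -
  have Ns[measurable]: "N \<in> M \<rightarrow>\<^sub>M subprob_algebra K" using N by (rule measurable_prob_algebraD)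
  have ne: "space M \<noteq> {}" using M by (simp add: prob_space.not_empty)
  have sb: "sets (bind M N) = sets K" by (rule sets_bind_measurable[OF Ns ne])
  have gm[measurable]: "g \<in> borel_measurable K"
    using g borel_measurable_integrable measurable_cong_sets[OF sb refl] by blast
  have sN: "\<And>x. x \<in> space M \<Longrightarrow> sets (N x) = sets K" by (rule sets_kernel[OF Ns])
  have gmN: "\<And>x. x \<in> space M \<Longrightarrow> g \<in> borel_measurable (N x)"
    using gm measurable_cong_sets[OF sN refl] by blast
  define G where "G x = (\<integral>\<^sup>+y. ennreal (g y) \<partial>N x)" for x
  have Gm[measurable]: "G \<in> borel_measurable M" unfolding G_def by measurable
  have "(\<integral>\<^sup>+y. ennreal (g y) \<partial>bind M N) = (\<integral>\<^sup>+x. G x \<partial>M)"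
    unfolding G_def by (rule nn_integral_bind[OF _ Ns]) measurable
  moreover have "(\<integral>\<^sup>+y. ennreal (g y) \<partial>bind M N) < \<infinity>"
    using integrableD(2)[OF g] g0 by (simp add: top.not_eq_extremum)
  ultimately have Gfin: "(\<integral>\<^sup>+x. G x \<partial>M) < \<infinity>" and
    eqn: "(\<integral>\<^sup>+y. ennreal (g y) \<partial>bind M N) = (\<integral>\<^sup>+x. G x \<partial>M)" by auto
  have AEG: "AE x in M. G x \<noteq> \<infinity>"
    using nn_integral_PInf_AE[OF Gm] Gfin by auto
  show "AE x in M. integrable (N x) g"
    using AEG AE_space
  proof eventually_elim
    case (elim x)
    show ?case
      by (rule integrableI_nonneg) (use elim gmN g0 in \<open>auto simp: G_def top.not_eq_extremum\<close>)
  qed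
  have intN: "\<And>x. x \<in> space M \<Longrightarrow> integral\<^sup>L (N x) g = enn2real (G x)"
    unfolding G_def using gmN g0 by (intro integral_eq_nn_integral) auto
  have nnG: "(\<integral>\<^sup>+x. ennreal (enn2real (G x)) \<partial>M) = (\<integral>\<^sup>+x. G x \<partial>M)"
    using AEG by (intro nn_integral_cong_AE) (auto elim!: eventually_mono simp: ennreal_enn2real top.not_eq_extremum)
  have intG: "integrable M (\<lambda>x. enn2real (G x))"
    by (rule integrableI_nonneg) (use nnG Gfin in auto)
  show "integrable M (\<lambda>x. integral\<^sup>L (N x) g)"
  proof -
    have "integrable M (\<lambda>x. integral\<^sup>L (N x) g) \<longleftrightarrow> integrable M (\<lambda>x. enn2real (G x))"
      using intN by (intro Bochner_Integration.integrable_cong) auto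
    then show ?thesis using intG by simp
  qed
  have "integral\<^sup>L (bind M N) g = enn2real (\<integral>\<^sup>+y. ennreal (g y) \<partial>bind M N)"
    using g g0 by (intro integral_eq_nn_integral) auto
  also have "\<dots> = enn2real (\<integral>\<^sup>+x. G x \<partial>M)" using eqn by simp
  also have "\<dots> = (\<integral>x. enn2real (G x) \<partial>M)"
    using nnG by (subst integral_eq_nn_integral) auto
  also have "\<dots> = (\<integral>x. integral\<^sup>L (N x) g \<partial>M)"
    by (intro Bochner_Integration.integral_cong) (auto simp: intN)
  finally show "integral\<^sup>L (bind M N) g = (\<integral>x. integral\<^sup>L (N x) g \<partial>M)" .
qed

lemma bind_integral_gen:
  fixes f :: "'b \<Rightarrow> real"
  assumes N: "N \<in> M \<rightarrow>\<^sub>M prob_algebra K" and M: "prob_space M"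
    and f: "integrable (bind M N) f"
  shows "AE x in M. integrable (N x) f"
    and "integrable M (\<lambda>x. integral\<^sup>L (N x) f)"
    and "integral\<^sup>L (bind M N) f = (\<integral>x. integral\<^sup>L (N x) f \<partial>M)"
proof -
  define g1 where "g1 y = max (f y) 0" for y
  define g2 where "g2 y = max (- f y) 0" for y
  have fg: "\<And>y. f y = g1 y - g2 y" unfolding g1_def g2_def by auto
  have i1: "integrable (bind M N) g1" unfolding g1_def using f by auto
  have i2: "integrable (bind M N) g2" unfolding g2_def using f by auto
  have p1: "\<And>y. 0 \<le> g1 y" "\<And>y. 0 \<le> g2 y" unfolding g1_def g2_def by auto
  note b1 = bind_integral_nonneg[OF N M i1 p1(1)]
  note b2 = bind_integral_nonneg[OF N M i2 p1(2)]
  have fe: "f = (\<lambda>y. g1 y - g2 y)" using fg by auto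
  have AEi: "AE x in M. integrable (N x) g1 \<and> integrable (N x) g2"
    using b1(1) b2(1) by eventually_elim auto
  show "AE x in M. integrable (N x) f"
    using AEi by eventually_elim (auto simp: fe)
  have AEe: "AE x in M. integral\<^sup>L (N x) f = integral\<^sup>L (N x) g1 - integral\<^sup>L (N x) g2"
    using AEi by eventually_elim (auto simp: fe)
  have id: "integrable M (\<lambda>x. integral\<^sup>L (N x) g1 - integral\<^sup>L (N x) g2)"
    using b1(2) b2(2) by auto
  have Ns[measurable]: "N \<in> M \<rightarrow>\<^sub>M subprob_algebra K" using N by (rule measurable_prob_algebraD)
  have ne: "space M \<noteq> {}" using M by (simp add: prob_space.not_empty)
  have sb: "sets (bind M N) = sets K" by (rule sets_bind_measurable[OF Ns ne])
  have fm[measurable]: "f \<in> borel_measurable K"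
    using f borel_measurable_integrable measurable_cong_sets[OF sb refl] by blast
  have im: "(\<lambda>x. integral\<^sup>L (N x) f) \<in> borel_measurable M" by measurable
  show "integrable M (\<lambda>x. integral\<^sup>L (N x) f)"
    by (rule integrable_cong_AE_imp[OF id im]) (use AEe in \<open>auto elim!: eventually_mono\<close>)
  have "integral\<^sup>L (bind M N) f = integral\<^sup>L (bind M N) g1 - integral\<^sup>L (bind M N) g2"
    using i1 i2 by (simp add: fe)
  also have "\<dots> = (\<integral>x. integral\<^sup>L (N x) g1 - integral\<^sup>L (N x) g2 \<partial>M)"
    using b1(2,3) b2(2,3) by simp
  also have "\<dots> = (\<integral>x. integral\<^sup>L (N x) f \<partial>M)"
    using AEe id im by (intro integral_cong_AE) (auto elim!: eventually_mono)
  finally show "integral\<^sup>L (bind M N) f = (\<integral>x. integral\<^sup>L (N x) f \<partial>M)" .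
qed

lemma psf: "prob_space M \<Longrightarrow> sigma_finite_measure M"
  by (simp add: prob_space_imp_subprob_space subprob_space_imp_sigma_finite)

lemma bind_pair:
  assumes H[measurable]: "H \<in> A \<rightarrow>\<^sub>M prob_algebra S" and A: "prob_space A" and B: "prob_space B"
  shows "bind A H \<Otimes>\<^sub>M B = bind A (\<lambda>\<theta>. H \<theta> \<Otimes>\<^sub>M B)"
proof -
  have Asp: "A \<in> space (prob_algebra A)" using A by (simp add: space_prob_algebra)
  have Bsp: "B \<in> space (prob_algebra B)" using B by (simp add: space_prob_algebra)
  have K: "(\<lambda>\<theta>. H \<theta> \<Otimes>\<^sub>M B) \<in> A \<rightarrow>\<^sub>M prob_algebra (S \<Otimes>\<^sub>M B)"
    by (rule measurable_pair_prob[OF H measurable_const[OF Bsp]])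
  have sH: "sets (bind A H) = sets S" by (rule sets_bind'[OF Asp H])
  interpret Bs: sigma_finite_measure B using psf[OF B] .
  show ?thesis
  proof (rule pair_measure_eqI)
    show "sigma_finite_measure (bind A H)" using psf[OF prob_space_bind'[OF Asp H]] .
    show "sigma_finite_measure B" using psf[OF B] .
    show "sets (bind A H \<Otimes>\<^sub>M B) = sets (bind A (\<lambda>\<theta>. H \<theta> \<Otimes>\<^sub>M B))"
      using sets_bind'[OF Asp K] sets_pair_measure_cong[OF sH refl] by simp
  next
    fix X Y assume X: "X \<in> sets (bind A H)" and Y: "Y \<in> sets B"
    have XS: "X \<in> sets S" using X sH by simp
    have "emeasure (bind A H) X * emeasure B Y = (\<integral>\<^sup>+\<theta>. emeasure (H \<theta>) X \<partial>A) * emeasure B Y"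
      using emeasure_bind_prob_algebra[OF Asp H XS] by simp
    also have "\<dots> = (\<integral>\<^sup>+\<theta>. emeasure (H \<theta>) X * emeasure B Y \<partial>A)"
      using XS by (subst nn_integral_multc) (auto intro: measurable_emeasure_kernel[OF measurable_prob_algebraD[OF H]])
    also have "\<dots> = (\<integral>\<^sup>+\<theta>. emeasure (H \<theta> \<Otimes>\<^sub>M B) (X \<times> Y) \<partial>A)"
    proof (intro nn_integral_cong)
      fix \<theta> assume "\<theta> \<in> space A"
      then have "sets (H \<theta>) = sets S" using measurable_space[OF H] by (simp add: space_prob_algebra)
      then show "emeasure (H \<theta>) X * emeasure B Y = emeasure (H \<theta> \<Otimes>\<^sub>M B) (X \<times> Y)"
        using XS Y by (simp add: Bs.emeasure_pair_measure_Times)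
    qed
    also have "\<dots> = emeasure (bind A (\<lambda>\<theta>. H \<theta> \<Otimes>\<^sub>M B)) (X \<times> Y)"
      using XS Y by (intro emeasure_bind_prob_algebra[OF Asp K, symmetric]) auto
    finally show "emeasure (bind A H) X * emeasure B Y = emeasure (bind A (\<lambda>\<theta>. H \<theta> \<Otimes>\<^sub>M B)) (X \<times> Y)" .
  qed
qed

lemma (in product_sigma_finite) distr_fun_upd:
  assumes I: "finite I" "i \<notin> I"
  shows "distr (PiM I M \<Otimes>\<^sub>M M i) (PiM (insert i I) M) (\<lambda>(f, y). f(i := y)) = PiM (insert i I) M"
proof (rule PiM_eqI)
  show "finite (insert i I)" using I by simp
  show "sets (distr (PiM I M \<Otimes>\<^sub>M M i) (PiM (insert i I) M) (\<lambda>(f, y). f(i := y))) = sets (PiM (insert i I) M)"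
    by simp
next
  fix E assume E: "\<And>j. j \<in> insert i I \<Longrightarrow> E j \<in> sets (M j)"
  interpret fI: finite_product_sigma_finite M I by standard (use I in simp)
  let ?h = "(\<lambda>(f, y). f(i := y))"
  have "emeasure (distr (PiM I M \<Otimes>\<^sub>M M i) (PiM (insert i I) M) ?h) (Pi\<^sub>E (insert i I) E)
     = emeasure (PiM I M \<Otimes>\<^sub>M M i) (?h -` Pi\<^sub>E (insert i I) E \<inter> space (PiM I M \<Otimes>\<^sub>M M i))"
    using E I by (intro emeasure_distr measurable_add_dim sets_PiM_I_finite) auto
  also have "?h -` Pi\<^sub>E (insert i I) E \<inter> space (PiM I M \<Otimes>\<^sub>M M i) = Pi\<^sub>E I E \<times> E i"
    using E[THEN sets.sets_into_space] I
    by (force simp: space_pair_measure space_PiM PiE_def Pi_iff extensional_def split: if_split_asm)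
  also have "emeasure (PiM I M \<Otimes>\<^sub>M M i) (Pi\<^sub>E I E \<times> E i) = emeasure (PiM I M) (Pi\<^sub>E I E) * emeasure (M i) (E i)"
    using E I by (intro M.emeasure_pair_measure_Times sets_PiM_I_finite) auto
  also have "\<dots> = (\<Prod>j\<in>insert i I. emeasure (M j) (E j))"
    using E I by (simp add: emeasure_PiM mult.commute)
  finally show "emeasure (distr (PiM I M \<Otimes>\<^sub>M M i) (PiM (insert i I) M) ?h) (Pi\<^sub>E (insert i I) E) = (\<Prod>j\<in>insert i I. emeasure (M j) (E j))" .
qed

lemma jensen_ln:
  fixes g :: "'a \<Rightarrow> real"
  assumes M: "prob_space M" and g: "integrable M g" and pos: "\<forall>y\<in>space M. 0 < g y"
    and lg: "integrable M (\<lambda>y. ln (g y))"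
  shows "(\<integral>y. ln (g y) \<partial>M) \<le> ln (\<integral>y. g y \<partial>M)"
proof -
  interpret prob_space M by fact
  have cv: "convex_on {0<..} (\<lambda>t. - ln t)"
    using ln_concave by (simp add: concave_on_def)
  have "- ln (expectation g) \<le> expectation (\<lambda>y. - ln (g y))"
    by (rule jensens_inequality[where a=0 and b=0 and I="{0<..}"])
       (use g pos lg cv in \<open>auto intro!: AE_I2\<close>)
  then show ?thesis by simp
qed

theorem theorem1:
  fixes Q :: "nat \<Rightarrow> 'p measure" and S :: "nat \<Rightarrow> 'h measure"
    and T :: "nat \<Rightarrow> 'h \<Rightarrow> 'p \<Rightarrow> 'h measure" and x :: 'h and L :: nat
    and lik :: "'h \<Rightarrow> 'p \<Rightarrow> real"
  assumes L: "1 \<le> L"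
    and Q: "\<forall>l<L. prob_space (Q l)"
    and x: "x \<in> space (S 0)"
    and T: "\<forall>l. Suc l < L \<longrightarrow>
              (\<lambda>(h, p). T l h p) \<in> S l \<Otimes>\<^sub>M Q l \<rightarrow>\<^sub>M prob_algebra (S (Suc l))"
    and lik_meas: "(\<lambda>(h, p). lik h p) \<in> borel_measurable (S (L - 1) \<Otimes>\<^sub>M Q (L - 1))"
    and lik_pos: "\<forall>h\<in>space (S (L - 1)). \<forall>p\<in>space (Q (L - 1)). 0 < lik h p"
    and int_pred: "\<forall>\<theta>\<in>space (PiM {..<L} Q).
              integrable (hidden S T x (L - 1) \<theta>) (\<lambda>h. lik h (\<theta> (L - 1)))"
    and int_ell: "integrable (PiM {..<L} Q) (\<lambda>\<theta>. ln (pred_lik S T x L lik \<theta>))"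
    and int_ell_bar: "integrable (hidden_pred Q S T x L \<Otimes>\<^sub>M Q (L - 1))
              (\<lambda>z. ln (lik (fst z) (snd z)))"
  shows "ell_bar Q S T x L lik \<le> ell Q S T x L lik \<and>
         ((\<forall>\<theta>\<in>space (PiM {..<L - 1} Q). \<exists>h. hidden S T x (L - 1) \<theta> = return (S (L - 1)) h)
            \<longrightarrow> ell_bar Q S T x L lik = ell Q S T x L lik)"
proof -
  define n where "n = L - 1"
  have Ln: "L = Suc n" using L n_def by simp
  have Lset: "{..<L} = insert n {..<n}" by (auto simp: Ln)
  define Q' where "Q' l = (if l < L then Q l else count_space {undefined})" for l
  have Q'ps: "prob_space (Q' l)" for l
    using Q by (cases "l < L") (auto simp: Q'_def intro!: prob_spaceI)
  interpret Q'i: prob_space "Q' i" for i by (rule Q'ps)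
  interpret Q'p: product_sigma_finite Q' by unfold_locales
  define A where "A = PiM {..<n} Q"
  define B where "B = Q n"
  define H where "H \<theta> = hidden S T x n \<theta>" for \<theta>
  define P where "P = PiM {..<L} Q"
  define F where "F \<theta> = ln (pred_lik S T x L lik \<theta>)" for \<theta>
  have PA: "A = PiM {..<n} Q'" unfolding A_def Q'_def by (intro PiM_cong) (auto simp: Ln)
  have PP: "P = PiM (insert n {..<n}) Q'" unfolding P_def Q'_def Lset[symmetric] by (intro PiM_cong) auto
  have BQ: "B = Q' n" unfolding B_def Q'_def by (simp add: Ln)
  have Aps: "prob_space A" unfolding A_def using Q by (intro prob_space_PiM) (auto simp: Ln)
  have Bps: "prob_space B" unfolding B_def using Q by (auto simp: Ln)
  interpret Ap: prob_space A by (rule Aps)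
  interpret Bp: prob_space B by (rule Bps)
  interpret AB: pair_prob_space A B by unfold_locales
  have Hk: "H \<in> A \<rightarrow>\<^sub>M prob_algebra (S n)"
    unfolding H_def A_def using hidden_kernel[OF x T, of n "{..<n}"] by (simp add: Ln)
  have Hsp: "\<And>\<theta>. \<theta> \<in> space A \<Longrightarrow> prob_space (H \<theta>) \<and> sets (H \<theta>) = sets (S n)"
    using measurable_space[OF Hk] by (simp add: space_prob_algebra)
  have updm: "(\<lambda>(f, y). f(n := y)) \<in> A \<Otimes>\<^sub>M B \<rightarrow>\<^sub>M P"
    unfolding PA BQ PP by (rule measurable_add_dim)
  have Pdistr: "distr (A \<Otimes>\<^sub>M B) P (\<lambda>(f, y). f(n := y)) = P"
    unfolding PA BQ PP by (rule Q'p.distr_fun_upd) auto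
  have updsp: "\<And>\<theta> p. \<theta> \<in> space A \<Longrightarrow> p \<in> space B \<Longrightarrow> \<theta>(n := p) \<in> space P"
    using measurable_space[OF updm] by (auto simp: space_pair_measure)
  have Hupd: "\<And>\<theta> p. hidden S T x (L - 1) (\<theta>(n := p)) = H \<theta>"
    unfolding H_def n_def by (rule hidden_cong) auto
  have Fupd: "\<And>\<theta> p. F (\<theta>(n := p)) = ln (\<integral>h. lik h p \<partial>H \<theta>)"
    unfolding F_def pred_lik_def Hupd by (simp add: n_def)
  have intpred: "\<And>\<theta> p. \<theta> \<in> space A \<Longrightarrow> p \<in> space B \<Longrightarrow> integrable (H \<theta>) (\<lambda>h. lik h p)"
    using int_pred updsp Hupd unfolding P_def by (metis fun_upd_same n_def)
  have intF: "integrable P F" using int_ell unfolding P_def F_def by simp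
  have Fm: "F \<in> borel_measurable P" using intF by auto
  have intFu: "integrable (A \<Otimes>\<^sub>M B) (\<lambda>z. F ((fst z)(n := snd z)))"
  proof -
    have "integrable (distr (A \<Otimes>\<^sub>M B) P (\<lambda>(f, y). f(n := y))) F" using intF Pdistr by simp
    then show ?thesis using integrable_distr_eq[OF updm Fm] by (simp add: split_beta')
  qed
  have ellA: "ell Q S T x L lik = (\<integral>\<theta>. (\<integral>p. F (\<theta>(n := p)) \<partial>B) \<partial>A)"
  proof -
    have "ell Q S T x L lik = integral\<^sup>L P F" unfolding ell_def P_def F_def by simp
    also have "\<dots> = integral\<^sup>L (distr (A \<Otimes>\<^sub>M B) P (\<lambda>(f, y). f(n := y))) F" using Pdistr by simp
    also have "\<dots> = (\<integral>z. F ((fst z)(n := snd z)) \<partial>(A \<Otimes>\<^sub>M B))"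
      by (subst integral_distr[OF updm Fm]) (simp add: split_beta')
    also have "\<dots> = (\<integral>\<theta>. (\<integral>p. F (\<theta>(n := p)) \<partial>B) \<partial>A)"
      using AB.integral_fst'[OF intFu] by simp
    finally show ?thesis .
  qed
  have intPsi: "integrable A (\<lambda>\<theta>. \<integral>p. F (\<theta>(n := p)) \<partial>B)"
    using AB.integrable_fst'[OF intFu] by simp
  have AEPsi: "AE \<theta> in A. integrable B (\<lambda>p. F (\<theta>(n := p)))"
    using AB.AE_integrable_fst'[OF intFu] by simp
  define f where "f = (\<lambda>(h, p). ln (lik h p))"
  have fe: "(\<lambda>z. ln (lik (fst z) (snd z))) = f" unfolding f_def by auto
  have hp: "hidden_pred Q S T x L = bind A H"
    unfolding hidden_pred_def A_def H_def n_def by simp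
  have bp: "bind A H \<Otimes>\<^sub>M B = bind A (\<lambda>\<theta>. H \<theta> \<Otimes>\<^sub>M B)"
    by (rule bind_pair[OF Hk Aps Bps])
  have Bsp: "B \<in> space (prob_algebra B)" using Bps by (simp add: space_prob_algebra)
  have K: "(\<lambda>\<theta>. H \<theta> \<Otimes>\<^sub>M B) \<in> A \<rightarrow>\<^sub>M prob_algebra (S n \<Otimes>\<^sub>M B)"
    by (rule measurable_pair_prob[OF Hk measurable_const[OF Bsp]])
  have intf: "integrable (bind A (\<lambda>\<theta>. H \<theta> \<Otimes>\<^sub>M B)) f"
    using int_ell_bar bp unfolding hp fe B_def n_def by simp
  note bg = bind_integral_gen[OF K Aps intf]
  have ellbA: "ell_bar Q S T x L lik = (\<integral>\<theta>. (\<integral>z. f z \<partial>(H \<theta> \<Otimes>\<^sub>M B)) \<partial>A)"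
    unfolding ell_bar_def hp fe using bg(3) bp by (simp add: B_def n_def)
  have inner: "\<And>\<theta>. \<theta> \<in> space A \<Longrightarrow> integrable (H \<theta> \<Otimes>\<^sub>M B) f \<Longrightarrow>
      (\<integral>z. f z \<partial>(H \<theta> \<Otimes>\<^sub>M B)) = (\<integral>p. (\<integral>h. ln (lik h p) \<partial>H \<theta>) \<partial>B)
      \<and> integrable B (\<lambda>p. (\<integral>h. ln (lik h p) \<partial>H \<theta>))
      \<and> (AE p in B. integrable (H \<theta>) (\<lambda>h. ln (lik h p)))"
  proof -
    fix \<theta> assume th: "\<theta> \<in> space A" and fi: "integrable (H \<theta> \<Otimes>\<^sub>M B) f"
    interpret Hp: prob_space "H \<theta>" using Hsp[OF th] by simp
    interpret HB: pair_prob_space "H \<theta>" B by unfold_locales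
    have fi': "integrable (H \<theta> \<Otimes>\<^sub>M B) (case_prod (\<lambda>h p. ln (lik h p)))" using fi unfolding f_def .
    show "?thesis \<theta>"
      using HB.integral_snd[OF fi'] HB.integrable_snd[OF fi'] HB.AE_integrable_snd[OF fi']
      unfolding f_def by simp
  qed
  have lik_pos': "\<And>h p. h \<in> space (S n) \<Longrightarrow> p \<in> space B \<Longrightarrow> 0 < lik h p"
    using lik_pos unfolding B_def n_def by auto
  have AEle: "AE \<theta> in A. (\<integral>z. f z \<partial>(H \<theta> \<Otimes>\<^sub>M B)) \<le> (\<integral>p. F (\<theta>(n := p)) \<partial>B)"
    using bg(1) AEPsi AE_space
  proof eventually_elim
    case (elim \<theta>)
    then have th: "\<theta> \<in> space A" by simp
    note inn = inner[OF th elim(1)]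
    have "(\<integral>p. (\<integral>h. ln (lik h p) \<partial>H \<theta>) \<partial>B) \<le> (\<integral>p. F (\<theta>(n := p)) \<partial>B)"
    proof (rule integral_mono_AE)
      show "integrable B (\<lambda>p. \<integral>h. ln (lik h p) \<partial>H \<theta>)" using inn by simp
      show "integrable B (\<lambda>p. F (\<theta>(n := p)))" using elim by simp
      show "AE p in B. (\<integral>h. ln (lik h p) \<partial>H \<theta>) \<le> F (\<theta>(n := p))"
        using conjunct2[OF conjunct2[OF inn]] AE_space
      proof eventually_elim
        case (elim p)
        show ?case unfolding Fupd
          by (rule jensen_ln) (use Hsp[OF th] elim intpred[OF th] lik_pos' in \<open>auto dest: sets_eq_imp_space_eq\<close>)
      qed
    qed
    then show ?case using inn by simp
  qed
  have part1: "ell_bar Q S T x L lik \<le> ell Q S T x L lik"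
    unfolding ellA ellbA by (rule integral_mono_AE[OF bg(2) intPsi AEle])
  show ?thesis
  proof (intro conjI impI part1)
    assume det: "\<forall>\<theta>\<in>space (PiM {..<L - 1} Q). \<exists>h. hidden S T x (L - 1) \<theta> = return (S (L - 1)) h"
    have det': "\<And>\<theta>. \<theta> \<in> space A \<Longrightarrow> \<exists>h. H \<theta> = return (S n) h"
      using det unfolding A_def H_def n_def by simp
    have AEeq: "AE \<theta> in A. (\<integral>z. f z \<partial>(H \<theta> \<Otimes>\<^sub>M B)) = (\<integral>p. F (\<theta>(n := p)) \<partial>B)"
      using bg(1) AE_space
    proof eventually_elim
      case (elim \<theta>)
      then have th: "\<theta> \<in> space A" by simp
      note inn = inner[OF th elim(1)]
      obtain h where h: "H \<theta> = return (S n) h" using det'[OF th] by blast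
      have hs: "h \<in> space (S n)"
      proof (rule ccontr)
        assume "h \<notin> space (S n)"
        then have "emeasure (H \<theta>) (space (S n)) = 0" unfolding h by simp
        moreover have "emeasure (H \<theta>) (space (H \<theta>)) = 1"
          using Hsp[OF th] by (simp add: prob_space.emeasure_space_1)
        ultimately show False using Hsp[OF th] h by simp
      qed
      have lm: "\<And>p. p \<in> space B \<Longrightarrow> (\<lambda>h. lik h p) \<in> borel_measurable (S n)"
      proof -
        fix p assume p: "p \<in> space B"
        have "(\<lambda>h. (\<lambda>(h, p). lik h p) (h, p)) \<in> borel_measurable (S n)"
          using measurable_compose[OF measurable_Pair2'[OF p] lik_meas[folded B_def n_def]] .
        then show "(\<lambda>h. lik h p) \<in> borel_measurable (S n)" by simp
      qed
      have "(\<integral>p. (\<integral>h. ln (lik h p) \<partial>H \<theta>) \<partial>B) = (\<integral>p. F (\<theta>(n := p)) \<partial>B)"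
      proof (intro Bochner_Integration.integral_cong refl)
        fix p assume p: "p \<in> space B"
        show "(\<integral>h. ln (lik h p) \<partial>H \<theta>) = F (\<theta>(n := p))"
          unfolding Fupd h using hs lm[OF p] by (simp add: integral_return)
      qed
      then show ?case using inn by simp
    qed
    show "ell_bar Q S T x L lik = ell Q S T x L lik"
      unfolding ellA ellbA using AEeq bg(2) intPsi by (intro integral_cong_AE) auto
  qed
qed

end
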